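(* Let $l(y_p,y)$ be a loss function differentiable in $y$, and let $g_l^*=\max_{y_p\in[-1,1]}\left|\frac{\partial l(y_p,y)}{\partial y}\big|_{y=0}\right|$ (assumed finite). Let $\lambda>0$. Suppose gradient-based data filtering is applied, i.e. only instances with gradient $|g_i|\le g_l^*$ are used. Then the sensitivity of the split gain $G(I_L,I_R)=\frac{(\sum_{i\in I_L}g_i)^2}{|I_L|+\lambda}+\frac{(\sum_{i\in I_R}g_i)^2}{|I_R|+\lambda}$ satisfies $\Delta G\le 3{g_l^*}^2$, and the sensitivity of the leaf value $V(I)=-\frac{\sum_{i\in I}g_i}{|I|+\lambda}$ satisfies $\Delta V\le \frac{g_l^*}{1+\lambda}$.
   Context: Gradient-based data filtering (GDF): at each boosting iteration, every training instance whose gradient $g_i$ satisfies $|g_i|>g_l^*$ is discarded for that iteration, so that all instances entering the computations of $G$ and $V$ have $|g_i|\le g_l^*$. Sensitivities are taken over neighboring inputs: for $G$, split configurations $(I_L,I_R)$ and one obtained by adding one instance to $I_L$ or to $I_R$; for $V$, instance sets $I$ and $I\cup\{s\}$. *)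

theory Defs
  imports "HOL-Analysis.Analysis"
begin

text \<open>Gradient bound: g_l^* = max over y_p in [-1,1] of the absolute derivative
  of l(y_p, y) with respect to y, evaluated at y = 0 (written as a supremum;
  finiteness is assumed separately).\<close>
definition gstar :: "(real \<Rightarrow> real \<Rightarrow> real) \<Rightarrow> real" where
  "gstar l = (SUP yp\<in>{-1..1}. \<bar>deriv (l yp) 0\<bar>)"

definition split_gain :: "('a \<Rightarrow> real) \<Rightarrow> real \<Rightarrow> 'a set \<Rightarrow> 'a set \<Rightarrow> real" where
  "split_gain g lam IL IR =
     (\<Sum>i\<in>IL. g i)\<^sup>2 / (real (card IL) + lam) + (\<Sum>i\<in>IR. g i)\<^sup>2 / (real (card IR) + lam)"

definition leaf_value :: "('a \<Rightarrow> real) \<Rightarrow> real \<Rightarrow> 'a set \<Rightarrow> real" where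
  "leaf_value g lam I = - (\<Sum>i\<in>I. g i) / (real (card I) + lam)"

end

theory Submission
  imports Defs
begin

lemma sum_bound:
  fixes g :: "'a \<Rightarrow> real"
  assumes "\<forall>i\<in>I. \<bar>g i\<bar> \<le> c"
  shows "\<bar>\<Sum>i\<in>I. g i\<bar> \<le> real (card I) * c"
proof -
  have "\<bar>\<Sum>i\<in>I. g i\<bar> \<le> (\<Sum>i\<in>I. \<bar>g i\<bar>)" by (rule sum_abs)
  also have "\<dots> \<le> of_nat (card I) * c" using assms by (intro sum_bounded_above) auto
  finally show ?thesis by simp
qed

lemma gain_step:
  fixes S x c n lam :: real
  assumes S: "\<bar>S\<bar> \<le> n * c" and x: "\<bar>x\<bar> \<le> c" and n: "n \<ge> 0" and lam: "lam > 0"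
  shows "\<bar>(S + x)\<^sup>2 / (n + 1 + lam) - S\<^sup>2 / (n + lam)\<bar> \<le> 3 * c\<^sup>2"
proof -
  define m where "m = n + lam"
  have m: "m > 0" using n lam m_def by simp
  have c: "c \<ge> 0" using x by simp
  have eq: "(S + x)\<^sup>2 / (n + 1 + lam) - S\<^sup>2 / (n + lam)
      = 2 * S * x / (m + 1) + x\<^sup>2 / (m + 1) - S\<^sup>2 / (m * (m + 1))"
  proof -
    have e: "n + 1 + lam = m + 1" "n + lam = m" using m_def by simp_all
    have "m + 1 > 0" "m > 0" "m + m * m > 0" using m by (simp_all add: add_pos_pos)
    show ?thesis unfolding e using m
      apply (simp add: divide_simps)
      apply (simp add: algebra_simps power2_eq_square)
      done
  qed
  have sx: "\<bar>S * x\<bar> \<le> n * c * c"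
    using S x c by (simp add: abs_mult mult_mono)
  have a: "\<bar>2 * S * x / (m + 1)\<bar> \<le> 2 * c\<^sup>2"
  proof -
    have k: "n * c * c \<le> c * c * (n + lam + 1)"
    proof -
      have "c * c * n \<le> c * c * (n + lam + 1)" using lam c by (intro mult_left_mono) auto
      thus ?thesis by (simp add: mult.commute mult.left_commute)
    qed
    have "\<bar>2 * S * x / (m + 1)\<bar> = 2 * \<bar>S * x\<bar> / (m + 1)" using m by (simp add: abs_mult)
    also have "\<dots> \<le> 2 * (n * c * c) / (m + 1)" using sx m by (simp add: divide_right_mono)
    also have "\<dots> \<le> 2 * c\<^sup>2" using m n c lam m_def k
      by (simp add: divide_le_eq power2_eq_square mult_right_mono mult_nonneg_nonneg
            mult.assoc[symmetric])
    finally show ?thesis .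
  qed
  have b1: "x\<^sup>2 / (m + 1) \<ge> 0" using m by simp
  have b2: "x\<^sup>2 / (m + 1) \<le> c\<^sup>2"
  proof -
    have "x\<^sup>2 \<le> c\<^sup>2" using x c by (metis abs_le_square_iff abs_of_nonneg)
    also have "\<dots> \<le> c\<^sup>2 * (m + 1)" using m by (simp add: mult_le_cancel_left1)
    finally show ?thesis using m by (simp add: divide_le_eq)
  qed
  have d1: "S\<^sup>2 / (m * (m + 1)) \<ge> 0" using m by simp
  have d2: "S\<^sup>2 / (m * (m + 1)) \<le> c\<^sup>2"
  proof -
    have "S\<^sup>2 \<le> (n * c)\<^sup>2" using S by (metis abs_le_square_iff abs_of_nonneg c n mult_nonneg_nonneg)
    also have "\<dots> = c\<^sup>2 * (n * n)" by (simp add: power2_eq_square)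
    also have "\<dots> \<le> c\<^sup>2 * (m * (m + 1))"
      using n lam m_def by (intro mult_left_mono mult_mono) auto
    finally show ?thesis using m by (simp add: divide_le_eq)
  qed
  show ?thesis unfolding eq using a b1 b2 d1 d2 by linarith
qed

lemma leaf_step:
  fixes S x c n lam :: real
  assumes S: "\<bar>S\<bar> \<le> n * c" and x: "\<bar>x\<bar> \<le> c" and n: "n \<ge> 0" and lam: "lam > 0"
    and nn: "n \<le> n * n"
  shows "\<bar>- (S + x) / (n + 1 + lam) - - S / (n + lam)\<bar> \<le> c / (1 + lam)"
proof -
  define m where "m = n + lam"
  have m: "m > 0" using n lam m_def by simp
  have c: "c \<ge> 0" using x by simp
  have eq: "- (S + x) / (n + 1 + lam) - - S / (n + lam) = S / (m * (m + 1)) - x / (m + 1)"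
  proof -
    have e: "n + 1 + lam = m + 1" "n + lam = m" using m_def by simp_all
    have "m + 1 > 0" "m > 0" "m + m * m > 0" using m by (simp_all add: add_pos_pos)
    show ?thesis unfolding e using m
      apply (simp add: divide_simps)
      apply (simp add: algebra_simps)
      done
  qed
  have "\<bar>S / (m * (m + 1)) - x / (m + 1)\<bar> \<le> \<bar>S\<bar> / (m * (m + 1)) + \<bar>x\<bar> / (m + 1)"
    using m by (simp add: abs_triangle_ineq4 [THEN order_trans] abs_divide)
  also have "\<dots> \<le> n * c / (m * (m + 1)) + c / (m + 1)"
    using m S x by (intro add_mono divide_right_mono) auto
  also have "\<dots> = c * (2 * n + lam) / (m * (m + 1))"
    using m unfolding m_def
    apply (simp add: divide_simps)
    apply (simp add: algebra_simps)
    done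
  also have "\<dots> \<le> c / (1 + lam)"
  proof -
    have "(2 * n + lam) * (1 + lam) \<le> m * (m + 1)"
      using nn n lam unfolding m_def by (simp add: algebra_simps)
    hence "c * (2 * n + lam) * (1 + lam) \<le> c * (m * (m + 1))"
      using c by (metis mult.assoc mult_left_mono)
    thus ?thesis using m lam
      by (simp add: divide_le_eq le_divide_eq mult.commute mult.left_commute)
  qed
  finally show ?thesis unfolding eq .
qed

theorem corollary1:
  fixes l :: "real \<Rightarrow> real \<Rightarrow> real" and g :: "'a \<Rightarrow> real" and lam :: real
  assumes diff: "\<And>yp y. l yp differentiable (at y)"
    and finite_max: "bdd_above ((\<lambda>yp. \<bar>deriv (l yp) 0\<bar>) ` {-1..1})"
    and lam_pos: "lam > 0"
  defines "D \<equiv> {i. \<bar>g i\<bar> \<le> gstar l}"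
  shows
    "(\<forall>IL IR s. finite IL \<and> finite IR \<and> IL \<inter> IR = {} \<and> IL \<subseteq> D \<and> IR \<subseteq> D
        \<and> s \<in> D \<and> s \<notin> IL \<and> s \<notin> IR \<longrightarrow>
        \<bar>split_gain g lam (insert s IL) IR - split_gain g lam IL IR\<bar> \<le> 3 * (gstar l)\<^sup>2 \<and>
        \<bar>split_gain g lam IL (insert s IR) - split_gain g lam IL IR\<bar> \<le> 3 * (gstar l)\<^sup>2)
     \<and> (\<forall>I s. finite I \<and> I \<subseteq> D \<and> s \<in> D \<and> s \<notin> I \<longrightarrow>
        \<bar>leaf_value g lam (insert s I) - leaf_value g lam I\<bar> \<le> gstar l / (1 + lam))"
proof (intro conjI allI impI; elim conjE)
  fix IL IR s
  assume f: "finite IL" "finite IR" and sub: "IL \<subseteq> D" "IR \<subseteq> D" and s: "s \<in> D" "s \<notin> IL" "s \<notin> IR"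
  have bL: "\<bar>\<Sum>i\<in>IL. g i\<bar> \<le> real (card IL) * gstar l"
    using sub by (intro sum_bound) (auto simp: D_def)
  have bR: "\<bar>\<Sum>i\<in>IR. g i\<bar> \<le> real (card IR) * gstar l"
    using sub by (intro sum_bound) (auto simp: D_def)
  have gs: "\<bar>g s\<bar> \<le> gstar l" using s D_def by simp
  show "\<bar>split_gain g lam (insert s IL) IR - split_gain g lam IL IR\<bar> \<le> 3 * (gstar l)\<^sup>2"
    using gain_step[OF bL gs _ lam_pos] f s
    by (simp add: split_gain_def add.commute add.left_commute)
  show "\<bar>split_gain g lam IL (insert s IR) - split_gain g lam IL IR\<bar> \<le> 3 * (gstar l)\<^sup>2"
    using gain_step[OF bR gs _ lam_pos] f s
    by (simp add: split_gain_def add.commute add.left_commute)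
next
  fix I s
  assume f: "finite I" and sub: "I \<subseteq> D" and s: "s \<in> D" "s \<notin> I"
  have b: "\<bar>\<Sum>i\<in>I. g i\<bar> \<le> real (card I) * gstar l"
    using sub by (intro sum_bound) (auto simp: D_def)
  have gs: "\<bar>g s\<bar> \<le> gstar l" using s D_def by simp
  have nn: "real (card I) \<le> real (card I) * real (card I)"
    by (cases "card I") auto
  show "\<bar>leaf_value g lam (insert s I) - leaf_value g lam I\<bar> \<le> gstar l / (1 + lam)"
    using leaf_step[OF b gs _ lam_pos nn] f s
    by (simp add: leaf_value_def add.commute add.left_commute)
qed

end
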